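(* Let $\mathbb{C}$ be a locally small category and $\mathbb{C}_{\mathit{fin}}$ a full subcategory satisfying (C1)–(C5) below. Let $U:\mathbb{C}^*\to\mathbb{C}$ be a reasonable expansion with unique restrictions, let $F$ be a homogeneous locally finite object of $\mathbb{C}$ and let $G=\mathrm{Aut}(F)$. Then for all $\mathcal{F},\mathcal{F}'\in U^{-1}(F)$ we have $\mathcal{F}'\in\overline{\mathcal{F}^G}$ (closure in the topology $\sigma_F$) if and only if $\mathrm{Age}(\mathcal{F}')\subseteq\mathrm{Age}(\mathcal{F})$.
   Context: Write $A\to B$ if $\hom(A,B)\ne\varnothing$. Conditions: (C1) all morphisms of $\mathbb{C}$ are monomorphisms; (C2) $\mathrm{Ob}(\mathbb{C}_{\mathit{fin}})$ is a set; (C3) $\hom(A,B)$ is finite for $A,B\in\mathrm{Ob}(\mathbb{C}_{\mathit{fin}})$; (C4) for every $F\in\mathrm{Ob}(\mathbb{C})$ there is $A\in\mathrm{Ob}(\mathbb{C}_{\mathit{fin}})$ with $A\to F$; (C5) for every $B\in\mathrm{Ob}(\mathbb{C}_{\mathit{fin}})$ the set $\{A\in\mathrm{Ob}(\mathbb{C}_{\mathit{fin}}):A\to B\}$ is finite. $F$ is homogeneous if for all $A\in\mathrm{Ob}(\mathbb{C}_{\mathit{fin}})$ and $e_1,e_2\in\hom(A,F)$ there is $g\in\mathrm{Aut}(F)$ with $g\cdot e_1=e_2$. $F$ is locally finite if for all $A,B\in\mathrm{Ob}(\mathbb{C}_{\mathit{fin}})$, $e\in\hom(A,F)$, $f\in\hom(B,F)$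 there exist $D\in\mathrm{Ob}(\mathbb{C}_{\mathit{fin}})$, $r\in\hom(D,F)$, $p\in\hom(A,D)$, $q\in\hom(B,D)$ with $r\cdot p=e$, $r\cdot q=f$, such that for every $H\in\mathrm{Ob}(\mathbb{C})$, $r'\in\hom(H,F)$, $p'\in\hom(A,H)$, $q'\in\hom(B,H)$ with $r'\cdot p'=e$, $r'\cdot q'=f$ there is $s\in\hom(D,H)$ with $r'\cdot s=r$, $s\cdot p=p'$, $s\cdot q=q'$. An expansion of $\mathbb{C}$ is a locally small category $\mathbb{C}^*$ with a functor $U:\mathbb{C}^*\to\mathbb{C}$ surjective on objects and injective on hom-sets; we regard $\hom_{\mathbb{C}^*}(\mathcal{A},\mathcal{B})\subseteq\hom_{\mathbb{C}}(U\mathcal{A},U\mathcal{B})$, and $U^{-1}(A)=\{\mathcal{A}:U(\mathcal{A})=A\}$. $U$ is reasonable if for every $e\in\hom(A,B)$ and $\mathcal{A}\in U^{-1}(A)$ there is $\mathcal{B}\in U^{-1}(B)$ with $e\in\hom(\mathcal{A},\mathcal{B})$; it has unique restrictions if for every $\mathcal{B}$ and $e\in\hom(A,U(\mathcal{B}))$ there is exactly one $\mathcal{A}\in U^{-1}(A)$ with $e\in\hom(\mathcal{A},\mathcal{B})$. $\mathbb{C}^*_{\mathit{fin}}$ is the full subcategory of $\mathbb{C}^*$ on $\bigcup\{U^{-1}(A):A\in\mathrm{Ob}(\mathbb{C}_{\mathit{fin}})\}$, and for $\mathcal{F}\in\mathrm{Ob}(\mathbb{C}^* )$, $\mathrm{Age}(\mathcal{F})=\{\mathcal{A}\in\mathrm{Ob}(\mathbb{C}^*_{\mathit{fin}}):\mathcal{A}\to\mathcal{F}\}$.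 For $g\in G$ and $\mathcal{F}\in U^{-1}(F)$, $\mathcal{F}^g$ is the unique $\mathcal{F}'\in U^{-1}(F)$ with $g^{-1}\in\hom(\mathcal{F},\mathcal{F}')$, and $\mathcal{F}^G=\{\mathcal{F}^g:g\in G\}$. $\sigma_F$ is the topology on $U^{-1}(F)$ generated by the sets $N(e,\mathcal{A})=\{\mathcal{F}\in U^{-1}(F):e\in\hom(\mathcal{A},\mathcal{F})\}$ for $\mathcal{A}\in\mathrm{Ob}(\mathbb{C}^*_{\mathit{fin}})$ and $e\in\hom(U(\mathcal{A}),F)$. *)

theory Defs
  imports "HOL-Analysis.Analysis"
begin

text \<open>A (locally small) category presented by its object set, hom-sets,
  composition (comp g f = g after f) and identities.\<close>

record ('o, 'm) cat =
  Ob   :: "'o set"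
  hom  :: "'o \<Rightarrow> 'o \<Rightarrow> 'm set"
  comp :: "'m \<Rightarrow> 'm \<Rightarrow> 'm"
  ide  :: "'o \<Rightarrow> 'm"

definition category :: "('o, 'm) cat \<Rightarrow> bool" where
  "category C \<longleftrightarrow>
     (\<forall>A B. hom C A B \<noteq> {} \<longrightarrow> A \<in> Ob C \<and> B \<in> Ob C) \<and>
     (\<forall>A\<in>Ob C. ide C A \<in> hom C A A) \<and>
     (\<forall>A\<in>Ob C. \<forall>B\<in>Ob C. \<forall>D\<in>Ob C. \<forall>f\<in>hom C A B. \<forall>g\<in>hom C B D.
        comp C g f \<in> hom C A D) \<and>
     (\<forall>A\<in>Ob C. \<forall>B\<in>Ob C. \<forall>D\<in>Ob C. \<forall>E\<in>Ob C.
        \<forall>f\<in>hom C A B. \<forall>g\<in>hom C B D. \<forall>h\<in>hom C D E.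
          comp C h (comp C g f) = comp C (comp C h g) f) \<and>
     (\<forall>A\<in>Ob C. \<forall>B\<in>Ob C. \<forall>f\<in>hom C A B.
          comp C (ide C B) f = f \<and> comp C f (ide C A) = f)"

definition disjoint_homs :: "('o, 'm) cat \<Rightarrow> bool" where
  "disjoint_homs C \<longleftrightarrow>
     (\<forall>A B A' B' f. f \<in> hom C A B \<and> f \<in> hom C A' B' \<longrightarrow> A = A' \<and> B = B')"

definition arrow :: "('o, 'm) cat \<Rightarrow> 'o \<Rightarrow> 'o \<Rightarrow> bool" where
  "arrow C A B \<longleftrightarrow> hom C A B \<noteq> {}"

text \<open>Conditions (C1)-(C5); Obfin is the object set of the full subcategory C_fin.\<close>

definition all_mono :: "('o, 'm) cat \<Rightarrow> bool" where
  "all_mono C \<longleftrightarrow>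
     (\<forall>X\<in>Ob C. \<forall>A\<in>Ob C. \<forall>B\<in>Ob C. \<forall>f\<in>hom C A B. \<forall>g\<in>hom C X A. \<forall>h\<in>hom C X A.
        comp C f g = comp C f h \<longrightarrow> g = h)"

definition fin_homs :: "('o, 'm) cat \<Rightarrow> 'o set \<Rightarrow> bool" where
  "fin_homs C Obfin \<longleftrightarrow> (\<forall>A\<in>Obfin. \<forall>B\<in>Obfin. finite (hom C A B))"

definition fin_below_every :: "('o, 'm) cat \<Rightarrow> 'o set \<Rightarrow> bool" where
  "fin_below_every C Obfin \<longleftrightarrow> (\<forall>F\<in>Ob C. \<exists>A\<in>Obfin. arrow C A F)"

definition fin_many_below :: "('o, 'm) cat \<Rightarrow> 'o set \<Rightarrow> bool" where
  "fin_many_below C Obfin \<longleftrightarrow> (\<forall>B\<in>Obfin. finite {A\<in>Obfin. arrow C A B})"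

definition isos_aut :: "('o, 'm) cat \<Rightarrow> 'o \<Rightarrow> 'm set" (\<open>Aut\<close>) where
  "Aut C F = {g \<in> hom C F F. \<exists>h\<in>hom C F F. comp C g h = ide C F \<and> comp C h g = ide C F}"

definition aut_inv :: "('o, 'm) cat \<Rightarrow> 'o \<Rightarrow> 'm \<Rightarrow> 'm" where
  "aut_inv C F g = (THE h. h \<in> hom C F F \<and> comp C g h = ide C F \<and> comp C h g = ide C F)"

definition homogeneous :: "('o, 'm) cat \<Rightarrow> 'o set \<Rightarrow> 'o \<Rightarrow> bool" where
  "homogeneous C Obfin F \<longleftrightarrow>
     (\<forall>A\<in>Obfin. \<forall>e1\<in>hom C A F. \<forall>e2\<in>hom C A F. \<exists>g\<in>Aut C F. comp C g e1 = e2)"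

definition locally_finite :: "('o, 'm) cat \<Rightarrow> 'o set \<Rightarrow> 'o \<Rightarrow> bool" where
  "locally_finite C Obfin F \<longleftrightarrow>
     (\<forall>A\<in>Obfin. \<forall>B\<in>Obfin. \<forall>e\<in>hom C A F. \<forall>f\<in>hom C B F.
        (\<exists>D\<in>Obfin. \<exists>r\<in>hom C D F. \<exists>p\<in>hom C A D. \<exists>q\<in>hom C B D.
           comp C r p = e \<and> comp C r q = f \<and>
           (\<forall>H\<in>Ob C. \<forall>r'\<in>hom C H F. \<forall>p'\<in>hom C A H. \<forall>q'\<in>hom C B H.
              comp C r' p' = e \<and> comp C r' q' = f \<longrightarrow>
              (\<exists>s\<in>hom C D H. comp C r' s = r \<and> comp C s p = p' \<and> comp C s q = q'))))"

text \<open>An expansion: a category D whose morphisms are morphisms of C, with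
  hom_D(a,b) \<subseteq> hom_C(U a, U b); the functor U acts on objects by U and as the
  identity (inclusion) on morphisms, hence is injective on hom-sets.\<close>

definition expansion :: "('o, 'm) cat \<Rightarrow> ('p, 'm) cat \<Rightarrow> ('p \<Rightarrow> 'o) \<Rightarrow> bool" where
  "expansion C D U \<longleftrightarrow>
     category D \<and>
     U ` Ob D = Ob C \<and>
     (\<forall>a\<in>Ob D. \<forall>b\<in>Ob D. hom D a b \<subseteq> hom C (U a) (U b)) \<and>
     (\<forall>a\<in>Ob D. ide D a = ide C (U a)) \<and>
     (\<forall>a\<in>Ob D. \<forall>b\<in>Ob D. \<forall>c\<in>Ob D. \<forall>f\<in>hom D a b. \<forall>g\<in>hom D b c.
        comp D g f = comp C g f)"

definition fiber :: "('p, 'm) cat \<Rightarrow> ('p \<Rightarrow> 'o) \<Rightarrow> 'o \<Rightarrow> 'p set" where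
  "fiber D U A = {a \<in> Ob D. U a = A}"

definition reasonable :: "('o, 'm) cat \<Rightarrow> ('p, 'm) cat \<Rightarrow> ('p \<Rightarrow> 'o) \<Rightarrow> bool" where
  "reasonable C D U \<longleftrightarrow>
     (\<forall>A\<in>Ob C. \<forall>B\<in>Ob C. \<forall>e\<in>hom C A B. \<forall>a\<in>fiber D U A.
        \<exists>b\<in>fiber D U B. e \<in> hom D a b)"

definition unique_restrictions :: "('o, 'm) cat \<Rightarrow> ('p, 'm) cat \<Rightarrow> ('p \<Rightarrow> 'o) \<Rightarrow> bool" where
  "unique_restrictions C D U \<longleftrightarrow>
     (\<forall>b\<in>Ob D. \<forall>A\<in>Ob C. \<forall>e\<in>hom C A (U b). \<exists>!a. a \<in> fiber D U A \<and> e \<in> hom D a b)"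

definition Age :: "('p, 'm) cat \<Rightarrow> ('p \<Rightarrow> 'o) \<Rightarrow> 'o set \<Rightarrow> 'p \<Rightarrow> 'p set" where
  "Age D U Obfin \<F> = {a \<in> Ob D. U a \<in> Obfin \<and> arrow D a \<F>}"

text \<open>The orbit F^G = { F^g : g \<in> Aut(F) }, where F^g is the (unique) F' in U^{-1}(F)
  with g^{-1} \<in> hom(F, F').\<close>
definition orbit :: "('o, 'm) cat \<Rightarrow> ('p, 'm) cat \<Rightarrow> ('p \<Rightarrow> 'o) \<Rightarrow> 'o \<Rightarrow> 'p \<Rightarrow> 'p set" where
  "orbit C D U F \<F> =
     {\<F>' \<in> fiber D U F. \<exists>g\<in>Aut C F. aut_inv C F g \<in> hom D \<F> \<F>'}"

definition Nset :: "('p, 'm) cat \<Rightarrow> ('p \<Rightarrow> 'o) \<Rightarrow> 'o \<Rightarrow> 'm \<Rightarrow> 'p \<Rightarrow> 'p set" where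
  "Nset D U F e a = {\<F> \<in> fiber D U F. e \<in> hom D a \<F>}"

definition sigma_top :: "('o, 'm) cat \<Rightarrow> ('p, 'm) cat \<Rightarrow> ('p \<Rightarrow> 'o) \<Rightarrow> 'o set \<Rightarrow> 'o \<Rightarrow> 'p topology" where
  "sigma_top C D U Obfin F =
     subtopology
       (topology_generated_by
          {Nset D U F e a | e a. a \<in> Ob D \<and> U a \<in> Obfin \<and> e \<in> hom C (U a) F})
       (fiber D U F)"

end

theory Submission
  imports Defs
begin

lemma cat_parts:
  assumes "category C"
  shows "(\<forall>A B. hom C A B \<noteq> {} \<longrightarrow> A \<in> Ob C \<and> B \<in> Ob C)"
    "(\<forall>A\<in>Ob C. ide C A \<in> hom C A A)"
    "(\<forall>A\<in>Ob C. \<forall>B\<in>Ob C. \<forall>D\<in>Ob C. \<forall>f\<in>hom C A B. \<forall>g\<in>hom C B D.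
        comp C g f \<in> hom C A D)"
    "(\<forall>A\<in>Ob C. \<forall>B\<in>Ob C. \<forall>D\<in>Ob C. \<forall>E\<in>Ob C.
        \<forall>f\<in>hom C A B. \<forall>g\<in>hom C B D. \<forall>h\<in>hom C D E.
          comp C h (comp C g f) = comp C (comp C h g) f)"
    "(\<forall>A\<in>Ob C. \<forall>B\<in>Ob C. \<forall>f\<in>hom C A B.
          comp C (ide C B) f = f \<and> comp C f (ide C A) = f)"
  using assms unfolding category_def
  apply -
  apply (elim conjE, assumption)+
  done

lemma cat_ob: "category C \<Longrightarrow> f \<in> hom C A B \<Longrightarrow> A \<in> Ob C \<and> B \<in> Ob C"
  using cat_parts(1) by blast
lemma cat_ide: "category C \<Longrightarrow> A \<in> Ob C \<Longrightarrow> ide C A \<in> hom C A A"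
  using cat_parts(2) by blast
lemma cat_comp: "category C \<Longrightarrow> f \<in> hom C A B \<Longrightarrow> g \<in> hom C B E \<Longrightarrow> comp C g f \<in> hom C A E"
proof -
  assume c: "category C" and f: "f \<in> hom C A B" and g: "g \<in> hom C B E"
  have "A \<in> Ob C" "B \<in> Ob C" "E \<in> Ob C" using cat_ob[OF c f] cat_ob[OF c g] by auto
  then show ?thesis using cat_parts(3)[OF c, rule_format] f g by blast
qed
lemma cat_assoc: "category C \<Longrightarrow> f \<in> hom C A B \<Longrightarrow> g \<in> hom C B E \<Longrightarrow> h \<in> hom C E K
   \<Longrightarrow> comp C h (comp C g f) = comp C (comp C h g) f"
proof -
  assume c: "category C" and f: "f \<in> hom C A B" and g: "g \<in> hom C B E" and h: "h \<in> hom C E K"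
  have o: "A \<in> Ob C" "B \<in> Ob C" "E \<in> Ob C" "K \<in> Ob C" using cat_ob[OF c f] cat_ob[OF c g] cat_ob[OF c h] by auto
  show ?thesis using cat_parts(4)[OF c, rule_format, OF o f g h] .
qed
lemma cat_idl: "category C \<Longrightarrow> f \<in> hom C A B \<Longrightarrow> comp C (ide C B) f = f"
proof -
  assume c: "category C" and f: "f \<in> hom C A B"
  have o: "A \<in> Ob C" "B \<in> Ob C" using cat_ob[OF c f] by auto
  show ?thesis using cat_parts(5)[OF c, rule_format, OF o f] by simp
qed
lemma cat_idr: "category C \<Longrightarrow> f \<in> hom C A B \<Longrightarrow> comp C f (ide C A) = f"
proof -
  assume c: "category C" and f: "f \<in> hom C A B"
  have o: "A \<in> Ob C" "B \<in> Ob C" using cat_ob[OF c f] by auto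
  show ?thesis using cat_parts(5)[OF c, rule_format, OF o f] by simp
qed

lemma lf_amalg:
  assumes "locally_finite C Obfin F" "A \<in> Obfin" "B \<in> Obfin" "e \<in> hom C A F" "f \<in> hom C B F"
  shows "\<exists>D0 r p q. D0 \<in> Obfin \<and> r \<in> hom C D0 F \<and> p \<in> hom C A D0 \<and> q \<in> hom C B D0 \<and>
           comp C r p = e \<and> comp C r q = f"
proof -
  note X = assms(1)[unfolded locally_finite_def, rule_format, OF assms(2) assms(3) assms(4) assms(5)]
  from X obtain D0 r p q where "D0 \<in> Obfin" "r \<in> hom C D0 F" "p \<in> hom C A D0" "q \<in> hom C B D0"
           "comp C r p = e" "comp C r q = f" by (elim bexE conjE)
  then show ?thesis by blast
qed

lemma aut_inv_props:
  assumes cat: "category C" and FOb: "F \<in> Ob C" and g: "g \<in> Aut C F"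
  shows "aut_inv C F g \<in> hom C F F \<and> comp C g (aut_inv C F g) = ide C F
         \<and> comp C (aut_inv C F g) g = ide C F"
proof -
  obtain h where h: "h \<in> hom C F F" "comp C g h = ide C F" "comp C h g = ide C F"
    using g unfolding isos_aut_def by blast
  have gF: "g \<in> hom C F F" using g unfolding isos_aut_def by blast
  have uniq: "h' = h" if h': "h' \<in> hom C F F" "comp C g h' = ide C F" "comp C h' g = ide C F" for h'
  proof -
    have "h' = comp C h' (ide C F)" using cat_idr[OF cat h'(1)] by simp
    also have "\<dots> = comp C h' (comp C g h)" using h by simp
    also have "\<dots> = comp C (comp C h' g) h" using cat_assoc[OF cat h(1) gF h'(1)] by simp
    also have "\<dots> = comp C (ide C F) h" using h' by simp
    also have "\<dots> = h" using cat_idl[OF cat h(1)] by simp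
    finally show ?thesis .
  qed
  have "aut_inv C F g = h"
    unfolding aut_inv_def
  proof (rule the_equality)
    show "h \<in> hom C F F \<and> comp C g h = ide C F \<and> comp C h g = ide C F" using h by simp
  next
    fix h' assume "h' \<in> hom C F F \<and> comp C g h' = ide C F \<and> comp C h' g = ide C F"
    then show "h' = h" using uniq by simp
  qed
  then show ?thesis using h by simp
qed

lemma aut_inv_aut:
  assumes cat: "category C" and FOb: "F \<in> Ob C" and g: "g \<in> Aut C F"
  shows "aut_inv C F g \<in> Aut C F \<and> aut_inv C F (aut_inv C F g) = g"
proof -
  have i: "aut_inv C F g \<in> hom C F F" "comp C g (aut_inv C F g) = ide C F"
         "comp C (aut_inv C F g) g = ide C F"
    using aut_inv_props[OF assms] by auto
  have gF: "g \<in> hom C F F" using g unfolding isos_aut_def by blast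
  have a: "aut_inv C F g \<in> Aut C F" unfolding isos_aut_def
    using i gF by (simp add: bexI[of _ g])
  have ii: "aut_inv C F (aut_inv C F g) \<in> hom C F F"
     "comp C (aut_inv C F g) (aut_inv C F (aut_inv C F g)) = ide C F"
     "comp C (aut_inv C F (aut_inv C F g)) (aut_inv C F g) = ide C F"
    using aut_inv_props[OF cat FOb a] by auto
  have "aut_inv C F (aut_inv C F g) = comp C (ide C F) (aut_inv C F (aut_inv C F g))"
    using cat_idl[OF cat ii(1)] by simp
  also have "\<dots> = comp C (comp C g (aut_inv C F g)) (aut_inv C F (aut_inv C F g))" using i by simp
  also have "\<dots> = comp C g (comp C (aut_inv C F g) (aut_inv C F (aut_inv C F g)))"
    using cat_assoc[OF cat ii(1) i(1) gF] by simp
  also have "\<dots> = comp C g (ide C F)" using ii by simp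
  also have "\<dots> = g" using cat_idr[OF cat gF] by simp
  finally show ?thesis using a by simp
qed

theorem lemma5p11:
  fixes C :: "('o, 'm) cat" and Obfin :: "'o set"
    and D :: "('p, 'm) cat" and U :: "'p \<Rightarrow> 'o" and F :: 'o
  assumes cat: "category C" "disjoint_homs C"
    and fin_sub: "Obfin \<subseteq> Ob C"
    and C1: "all_mono C"
    and C3: "fin_homs C Obfin"
    and C4: "fin_below_every C Obfin"
    and C5: "fin_many_below C Obfin"
    and exp: "expansion C D U"
    and reas: "reasonable C D U"
    and ur: "unique_restrictions C D U"
    and FOb: "F \<in> Ob C"
    and hom: "homogeneous C Obfin F"
    and lf: "locally_finite C Obfin F"
    and F1: "\<F> \<in> fiber D U F"
    and F2: "\<F>' \<in> fiber D U F"
  shows "\<F>' \<in> sigma_top C D U Obfin F closure_of orbit C D U F \<F>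
         \<longleftrightarrow> Age D U Obfin \<F>' \<subseteq> Age D U Obfin \<F>"
proof -
  have catD: "category D" using exp unfolding expansion_def by blast
  have UOb: "U ` Ob D = Ob C" using exp unfolding expansion_def by blast
  have homD: "a \<in> Ob D \<and> b \<in> Ob D \<and> f \<in> hom C (U a) (U b)" if "f \<in> hom D a b" for f a b
  proof -
    have "a \<in> Ob D \<and> b \<in> Ob D" using cat_ob[OF catD that] by blast
    then show ?thesis using exp that unfolding expansion_def by blast
  qed
  have compD: "comp C g f \<in> hom D a c" if "f \<in> hom D a b" "g \<in> hom D b c" for f g a b c
  proof -
    have o: "a \<in> Ob D" "b \<in> Ob D" "c \<in> Ob D" using homD that by auto
    have "comp D g f \<in> hom D a c" using cat_comp[OF catD that] by blast
    moreover have "comp D g f = comp C g f" using exp o that unfolding expansion_def by blast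
    ultimately show ?thesis by simp
  qed
  have ideD: "ide C (U b) \<in> hom D b b" if "b \<in> Ob D" for b
    using exp cat_ide[OF catD that] that unfolding expansion_def by simp
  have ur_ex: "\<exists>a. a \<in> fiber D U A \<and> e \<in> hom D a b"
    if "b \<in> Ob D" "A \<in> Ob C" "e \<in> hom C A (U b)" for b A e
    using ur that unfolding unique_restrictions_def by blast
  have ur_uniq: "a = a'" if "e \<in> hom D a b" "e \<in> hom D a' b" "U a = U a'" for e a a' b
  proof -
    have o: "a \<in> Ob D" "a' \<in> Ob D" "b \<in> Ob D" "e \<in> hom C (U a) (U b)" using homD that by auto
    have "U a \<in> Ob C" using UOb o by blast
    then have "\<exists>!x. x \<in> fiber D U (U a) \<and> e \<in> hom D x b"
      using ur o unfolding unique_restrictions_def by blast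
    then show ?thesis using that o unfolding fiber_def by auto
  qed
  have F1': "\<F> \<in> Ob D" "U \<F> = F" using F1 unfolding fiber_def by auto
  have F2': "\<F>' \<in> Ob D" "U \<F>' = F" using F2 unfolding fiber_def by auto
  define S where "S = {Nset D U F e a | e a. a \<in> Ob D \<and> U a \<in> Obfin \<and> e \<in> hom C (U a) F}"
  have ST: "sigma_top C D U Obfin F = subtopology (topology_generated_by S) (fiber D U F)"
    unfolding sigma_top_def S_def by simp
  have Nsub: "Nset D U F e a \<subseteq> fiber D U F" for e a unfolding Nset_def by auto
  show ?thesis
  proof
    assume cl: "\<F>' \<in> sigma_top C D U Obfin F closure_of orbit C D U F \<F>"
    show "Age D U Obfin \<F>' \<subseteq> Age D U Obfin \<F>"
    proof
      fix a assume "a \<in> Age D U Obfin \<F>'"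
      then obtain e where a: "a \<in> Ob D" "U a \<in> Obfin" "e \<in> hom D a \<F>'"
        unfolding Age_def arrow_def by auto
      have eC: "e \<in> hom C (U a) F" using homD[OF a(3)] F2' by simp
      have "Nset D U F e a \<in> S" unfolding S_def using a eC by blast
      then have "openin (topology_generated_by S) (Nset D U F e a)"
        by (rule topology_generated_by_Basis)
      then have "openin (sigma_top C D U Obfin F) (Nset D U F e a)"
        unfolding ST openin_subtopology using Nsub by blast
      moreover have "\<F>' \<in> Nset D U F e a" unfolding Nset_def using F2 a by blast
      ultimately obtain y where y: "y \<in> orbit C D U F \<F>" "y \<in> Nset D U F e a"
        using cl unfolding in_closure_of by blast
      from y obtain g where g: "g \<in> Aut C F" "aut_inv C F g \<in> hom D \<F> y" "y \<in> fiber D U F"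
        "e \<in> hom D a y"
        unfolding orbit_def Nset_def by blast
      have gi: "aut_inv C F g \<in> hom C F F" "comp C (aut_inv C F g) g = ide C F"
        using aut_inv_props[OF cat(1) FOb g(1)] by auto
      have gF: "g \<in> hom C F F" using g(1) unfolding isos_aut_def by blast
      obtain b where b: "b \<in> fiber D U F" "g \<in> hom D b \<F>"
        using ur_ex[OF F1'(1) FOb] gF F1' by auto
      have "comp C (aut_inv C F g) g \<in> hom D b y" using compD[OF b(2) g(2)] .
      then have i1: "ide C F \<in> hom D b y" using gi by simp
      have yO: "y \<in> Ob D" "U y = F" using g(3) unfolding fiber_def by auto
      have i2: "ide C F \<in> hom D y y" using ideD[OF yO(1)] yO by simp
      have "b = y" using ur_uniq[OF i1 i2] b(1) yO unfolding fiber_def by simp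
      then have "g \<in> hom D y \<F>" using b by simp
      then have "comp C g e \<in> hom D a \<F>" using compD g(4) by blast
      then show "a \<in> Age D U Obfin \<F>" unfolding Age_def arrow_def using a by blast
    qed
  next
    assume age: "Age D U Obfin \<F>' \<subseteq> Age D U Obfin \<F>"
    have key: "\<F>' \<in> W \<Longrightarrow> \<exists>e a. a \<in> Ob D \<and> U a \<in> Obfin \<and> e \<in> hom D a \<F>' \<and> Nset D U F e a \<subseteq> W"
      if "generate_topology_on S W" for W
      using that
    proof (induction rule: generate_topology_on.induct)
      case Empty
      then show ?case by simp
    next
      case (Int W1 W2)
      then obtain e1 a1 e2 a2 where
        h1: "a1 \<in> Ob D" "U a1 \<in> Obfin" "e1 \<in> hom D a1 \<F>'" "Nset D U F e1 a1 \<subseteq> W1" and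
        h2: "a2 \<in> Ob D" "U a2 \<in> Obfin" "e2 \<in> hom D a2 \<F>'" "Nset D U F e2 a2 \<subseteq> W2"
        by blast
      have e1C: "e1 \<in> hom C (U a1) F" using homD[OF h1(3)] F2' by simp
      have e2C: "e2 \<in> hom C (U a2) F" using homD[OF h2(3)] F2' by simp
      obtain D0 r p q where d: "D0 \<in> Obfin" "r \<in> hom C D0 F" "p \<in> hom C (U a1) D0"
        "q \<in> hom C (U a2) D0" "comp C r p = e1" "comp C r q = e2"
        using lf_amalg[OF lf h1(2) h2(2) e1C e2C] by blast
      obtain d where dd: "d \<in> fiber D U D0" "r \<in> hom D d \<F>'"
        using ur_ex[OF F2'(1), of D0 r] d fin_sub F2' by auto
      have dO: "d \<in> Ob D" "U d = D0" using dd unfolding fiber_def by auto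
      have U1: "U a1 \<in> Ob C" "U a2 \<in> Ob C" using h1 h2 fin_sub by auto
      obtain a1' where a1': "a1' \<in> fiber D U (U a1)" "p \<in> hom D a1' d"
        using ur_ex[OF dO(1) U1(1)] d dO by auto
      obtain a2' where a2': "a2' \<in> fiber D U (U a2)" "q \<in> hom D a2' d"
        using ur_ex[OF dO(1) U1(2)] d dO by auto
      have E1: "e1 \<in> hom D a1' \<F>'" using compD[OF a1'(2) dd(2)] d by simp
      have "a1' = a1" using ur_uniq[OF E1 h1(3)] a1'(1) unfolding fiber_def by simp
      have E2: "e2 \<in> hom D a2' \<F>'" using compD[OF a2'(2) dd(2)] d by simp
      have "a2' = a2" using ur_uniq[OF E2 h2(3)] a2'(1) unfolding fiber_def by simp
      have "Nset D U F r d \<subseteq> Nset D U F e1 a1 \<inter> Nset D U F e2 a2"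
      proof
        fix G assume "G \<in> Nset D U F r d"
        then have G: "G \<in> fiber D U F" "r \<in> hom D d G" unfolding Nset_def by auto
        have "comp C r p \<in> hom D a1 G" using compD[OF a1'(2) G(2)] \<open>a1' = a1\<close> by simp
        moreover have "comp C r q \<in> hom D a2 G" using compD[OF a2'(2) G(2)] \<open>a2' = a2\<close> by simp
        ultimately show "G \<in> Nset D U F e1 a1 \<inter> Nset D U F e2 a2"
          using G d unfolding Nset_def by auto
      qed
      then have "Nset D U F r d \<subseteq> W1 \<inter> W2" using h1(4) h2(4) by blast
      then show ?case apply (intro exI[of _ r] exI[of _ d]) using dO dd(2) d(1) by simp
    next
      case (UN K)
      then obtain k where "k \<in> K" "\<F>' \<in> k" by blast
      then show ?case using UN by blast
    next
      case (Basis s)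
      then obtain e a where s: "s = Nset D U F e a" "a \<in> Ob D" "U a \<in> Obfin"
        unfolding S_def by blast
      then have "e \<in> hom D a \<F>'" using Basis unfolding Nset_def by blast
      then show ?case using s by blast
    qed
    show "\<F>' \<in> sigma_top C D U Obfin F closure_of orbit C D U F \<F>"
      unfolding in_closure_of
    proof (intro conjI allI impI)
      obtain A where A: "A \<in> Obfin" "arrow C A F" using C4 FOb unfolding fin_below_every_def by blast
      then obtain e where e: "e \<in> hom C A F" unfolding arrow_def by blast
      obtain a where a: "a \<in> fiber D U A" "e \<in> hom D a \<F>'"
        using ur_ex[OF F2'(1), of A e] A fin_sub e F2' by auto
      have "Nset D U F e a \<in> S" unfolding S_def using a A e unfolding fiber_def by blast
      moreover have "\<F>' \<in> Nset D U F e a" using a F2 unfolding Nset_def by blast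
      ultimately show "\<F>' \<in> topspace (sigma_top C D U Obfin F)"
        unfolding ST using F2 by auto
    next
      fix T assume T: "\<F>' \<in> T \<and> openin (sigma_top C D U Obfin F) T"
      then obtain W where W: "openin (topology_generated_by S) W" "T = W \<inter> fiber D U F"
        unfolding ST openin_subtopology by blast
      have gen: "generate_topology_on S W" by (rule openin_topology_generated_by[OF W(1)])
      have "\<F>' \<in> W" using T W(2) by blast
      then obtain e a where ea: "a \<in> Ob D" "U a \<in> Obfin" "e \<in> hom D a \<F>'" "Nset D U F e a \<subseteq> W"
        using key[OF gen] by blast
      have "a \<in> Age D U Obfin \<F>'" unfolding Age_def arrow_def using ea by blast
      then have "a \<in> Age D U Obfin \<F>" using age by blast
      then obtain f where f: "f \<in> hom D a \<F>" unfolding Age_def arrow_def by blast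
      have fC: "f \<in> hom C (U a) F" using homD[OF f] F1' by simp
      have eC: "e \<in> hom C (U a) F" using homD[OF ea(3)] F2' by simp
      obtain g where g: "g \<in> Aut C F" "comp C g f = e"
        using hom ea(2) fC eC unfolding homogeneous_def by blast
      have gF: "g \<in> hom C F F" using g(1) unfolding isos_aut_def by blast
      obtain G where G: "G \<in> fiber D U F" "g \<in> hom D \<F> G"
        using reas FOb gF F1 unfolding reasonable_def by blast
      have "e \<in> hom D a G" using compD[OF f G(2)] g by simp
      then have GN: "G \<in> Nset D U F e a" using G unfolding Nset_def by blast
      have ai: "aut_inv C F g \<in> Aut C F" "aut_inv C F (aut_inv C F g) = g"
        using aut_inv_aut[OF cat(1) FOb g(1)] by auto
      have "G \<in> orbit C D U F \<F>" unfolding orbit_def using G ai by force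
      moreover have "G \<in> T" using GN ea W G by blast
      ultimately show "\<exists>y. y \<in> orbit C D U F \<F> \<and> y \<in> T" by blast
    qed
  qed
qed

end
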